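(* Let $n,d,c\in\mathbb{N}$ with $d\ge 50$ and $c\in[d]$, let $\mathcal{F}\subseteq 2^{[n]}$ be a hereditary family with $\delta(\mathcal{F})\ge 2^{d-1}-c+1$, and let $P$ be an isolated pile of $\mathcal{F}$ with $\sum_{x\in P}\omega_{\mathcal{F}}(x)<2^d-c$. Then the number $u$ of good vertices in $P$ satisfies $u\le 7$.
   Context: A family is hereditary if it is closed under taking subsets. $d_{\mathcal{F}}(x)=|\{F\in\mathcal{F}:x\in F\}|$, $\delta(\mathcal{F})=\min_x d_{\mathcal{F}}(x)$, $N(x)=\bigcup_{x\in F\in\mathcal{F}}F$. The weight of $x$ is $\omega_{\mathcal{F}}(x)=\sum_{x\in F\in\mathcal{F}}\frac{1}{|F|}$. A vertex $x$ is good if $|N(x)|\ge d+1$ and bad if $|N(x)|=d$. A set $P\subseteq[n]$ with $|P|=d$ is a pile of $\mathcal{F}$ if $P\subseteq N(y)$ for every $y\in P$, and there exists $z\in P$ with $N(z)=P$; a pile is isolated if it is disjoint from every other pile. *)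

theory Defs
  imports Main "HOL.Real"
begin

definition family_on :: "nat \<Rightarrow> nat set set \<Rightarrow> bool" where
  "family_on n F \<longleftrightarrow> F \<subseteq> Pow {1..n}"

definition hereditary :: "nat set set \<Rightarrow> bool" where
  "hereditary F \<longleftrightarrow> (\<forall>A B. A \<in> F \<longrightarrow> B \<subseteq> A \<longrightarrow> B \<in> F)"

definition deg :: "nat set set \<Rightarrow> nat \<Rightarrow> nat" where
  "deg F x = card {A \<in> F. x \<in> A}"

definition min_deg :: "nat \<Rightarrow> nat set set \<Rightarrow> nat" where
  "min_deg n F = Min ((deg F) ` {1..n})"

definition nbhd :: "nat set set \<Rightarrow> nat \<Rightarrow> nat set" where
  "nbhd F x = \<Union> {A \<in> F. x \<in> A}"

definition weight :: "nat set set \<Rightarrow> nat \<Rightarrow> real" where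
  "weight F x = (\<Sum>A \<in> {A \<in> F. x \<in> A}. 1 / real (card A))"

definition good :: "nat \<Rightarrow> nat set set \<Rightarrow> nat \<Rightarrow> bool" where
  "good d F x \<longleftrightarrow> card (nbhd F x) \<ge> d + 1"

definition bad :: "nat \<Rightarrow> nat set set \<Rightarrow> nat \<Rightarrow> bool" where
  "bad d F x \<longleftrightarrow> card (nbhd F x) = d"

definition is_pile :: "nat \<Rightarrow> nat \<Rightarrow> nat set set \<Rightarrow> nat set \<Rightarrow> bool" where
  "is_pile n d F P \<longleftrightarrow> P \<subseteq> {1..n} \<and> card P = d \<and>
     (\<forall>y \<in> P. P \<subseteq> nbhd F y) \<and> (\<exists>z \<in> P. nbhd F z = P)"

definition isolated_pile :: "nat \<Rightarrow> nat \<Rightarrow> nat set set \<Rightarrow> nat set \<Rightarrow> bool" where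
  "isolated_pile n d F P \<longleftrightarrow> is_pile n d F P \<and>
     (\<forall>Q. is_pile n d F Q \<and> Q \<noteq> P \<longrightarrow> P \<inter> Q = {})"

end

theory Submission
  imports Defs
begin

lemma card_Pow_mem:
  assumes "finite P" "x \<in> P"
  shows "card {A \<in> Pow P. x \<in> A} = 2 ^ (card P - 1)"
proof -
  have "bij_betw (\<lambda>A. A - {x}) {A \<in> Pow P. x \<in> A} (Pow (P - {x}))"
    using assms by (intro bij_betw_byWitness[where f'="insert x"]) auto
  hence "card {A \<in> Pow P. x \<in> A} = card (Pow (P - {x}))" by (rule bij_betw_same_card)
  also have "\<dots> = 2 ^ (card P - 1)" using assms by (simp add: card_Pow)
  finally show ?thesis .
qed

lemma nx_le_pow:
  assumes fin: "finite P" and MP: "Miss \<subseteq> Pow P"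
    and up: "\<And>S S'. S \<in> Miss \<Longrightarrow> S \<subseteq> S' \<Longrightarrow> S' \<subseteq> P \<Longrightarrow> S' \<in> Miss"
    and x: "x \<in> P"
  shows "card {S \<in> Miss. x \<notin> S} \<le> 2 ^ card {y \<in> P. y \<noteq> x \<and> P - {x,y} \<in> Miss}"
proof -
  let ?Nb = "{y \<in> P. y \<noteq> x \<and> P - {x,y} \<in> Miss}"
  have "inj_on (\<lambda>S. P - {x} - S) {S \<in> Miss. x \<notin> S}"
    using MP by (auto simp: inj_on_def)
  moreover have "(\<lambda>S. P - {x} - S) ` {S \<in> Miss. x \<notin> S} \<subseteq> Pow ?Nb"
  proof (rule image_subsetI, rule PowI, rule subsetI)
    fix S y assume S': "S \<in> {S \<in> Miss. x \<notin> S}" and y: "y \<in> P - {x} - S"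
    have S: "S \<in> Miss" "x \<notin> S" using S' by auto
    have "S \<subseteq> P - {x,y}" using S y MP by auto
    hence "P - {x,y} \<in> Miss" using up[OF S(1)] by blast
    thus "y \<in> ?Nb" using y by auto
  qed
  ultimately have "card {S \<in> Miss. x \<notin> S} \<le> card (Pow ?Nb)"
    by (intro card_inj_on_le) (auto intro: finite_subset[OF _ fin])
  also have "\<dots> = 2 ^ card ?Nb" using fin by (simp add: card_Pow)
  finally show ?thesis .
qed

lemma nb_le_Q:
  assumes fin: "finite P" and MP: "Miss \<subseteq> Pow P" and x: "x \<in> P"
  shows "card {y \<in> P. y \<noteq> x \<and> P - {x,y} \<in> Miss} \<le> card {S \<in> Miss. card (P - S) = 2 \<and> x \<notin> S}"
proof -
  have fM: "finite Miss" using MP fin by (meson finite_Pow_iff finite_subset)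
  have "inj_on (\<lambda>y. P - {x,y}) {y \<in> P. y \<noteq> x \<and> P - {x,y} \<in> Miss}"
    by (auto simp: inj_on_def)
  moreover have "(\<lambda>y. P - {x,y}) ` {y \<in> P. y \<noteq> x \<and> P - {x,y} \<in> Miss} \<subseteq> {S \<in> Miss. card (P - S) = 2 \<and> x \<notin> S}"
  proof (rule image_subsetI)
    fix y assume y': "y \<in> {y \<in> P. y \<noteq> x \<and> P - {x,y} \<in> Miss}"
    hence y: "y \<in> P" "y \<noteq> x" "P - {x,y} \<in> Miss" by auto
    have "P - (P - {x,y}) = {x,y}" using x y by auto
    thus "P - {x,y} \<in> {S \<in> Miss. card (P - S) = 2 \<and> x \<notin> S}" using y by simp
  qed
  ultimately show ?thesis by (intro card_inj_on_le) (auto intro: finite_subset[OF _ fM])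
qed

lemma sum_Q: 
  assumes fin: "finite P" and MP: "Miss \<subseteq> Pow P"
  shows "(\<Sum>x\<in>P. card {S \<in> Miss. card (P - S) = 2 \<and> x \<notin> S}) = 2 * card {S \<in> Miss. card (P - S) = 2}"
proof -
  let ?Q = "{S \<in> Miss. card (P - S) = 2}"
  have fM: "finite Miss" using MP fin by (meson finite_Pow_iff finite_subset)
  have fQ: "finite ?Q" using fM by auto
  have "(\<Sum>x\<in>P. card {S \<in> Miss. card (P - S) = 2 \<and> x \<notin> S}) = (\<Sum>x\<in>P. \<Sum>S\<in>?Q. if x \<notin> S then 1 else 0)"
  proof (rule sum.cong[OF refl])
    fix x assume "x \<in> P"
    have "{S \<in> Miss. card (P - S) = 2 \<and> x \<notin> S} = {S \<in> ?Q. x \<notin> S}" by auto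
    thus "card {S \<in> Miss. card (P - S) = 2 \<and> x \<notin> S} = (\<Sum>S\<in>?Q. if x \<notin> S then 1 else 0)"
      using fQ by (simp add: sum.If_cases Int_def)
  qed
  also have "\<dots> = (\<Sum>S\<in>?Q. \<Sum>x\<in>P. if x \<notin> S then 1 else 0)" by (rule sum.swap)
  also have "\<dots> = (\<Sum>S\<in>?Q. 2)"
  proof (rule sum.cong[OF refl])
    fix S assume "S \<in> ?Q"
    hence "card (P - S) = 2" by auto
    moreover have "{x \<in> P. x \<notin> S} = P - S" by auto
    ultimately show "(\<Sum>x\<in>P. if x \<notin> S then 1 else 0) = (2::nat)"
      using fin by (simp add: sum.If_cases Int_def)
  qed
  finally show ?thesis by simp
qed

lemma miss_count:
  assumes fin: "finite P" and MP: "Miss \<subseteq> Pow P" and PM: "P \<in> Miss"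
  shows "1 + card {S \<in> Miss. card (P - S) = 1} + card {S \<in> Miss. card (P - S) = 2} \<le> card Miss"
proof -
  have fM: "finite Miss" using MP fin by (meson finite_Pow_iff finite_subset)
  have "{P} \<union> {S \<in> Miss. card (P - S) = 1} \<union> {S \<in> Miss. card (P - S) = 2} \<subseteq> Miss" using PM by auto
  hence "card ({P} \<union> {S \<in> Miss. card (P - S) = 1} \<union> {S \<in> Miss. card (P - S) = 2}) \<le> card Miss"
    using fM by (rule card_mono[rotated])
  moreover have "card ({P} \<union> {S \<in> Miss. card (P - S) = 1} \<union> {S \<in> Miss. card (P - S) = 2})
     = 1 + card {S \<in> Miss. card (P - S) = 1} + card {S \<in> Miss. card (P - S) = 2}"
    using fM by (subst card_Un_disjoint; auto)+
  ultimately show ?thesis by simp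
qed

lemma nx_pos_count:
  assumes fin: "finite P" and MP: "Miss \<subseteq> Pow P"
    and up: "\<And>S S'. S \<in> Miss \<Longrightarrow> S \<subseteq> S' \<Longrightarrow> S' \<subseteq> P \<Longrightarrow> S' \<in> Miss"
  shows "card {x \<in> P. \<exists>S\<in>Miss. x \<notin> S} \<le> card {S \<in> Miss. card (P - S) = 1}"
proof -
  have fM: "finite Miss" using MP fin by (meson finite_Pow_iff finite_subset)
  have "inj_on (\<lambda>x. P - {x}) {x \<in> P. \<exists>S\<in>Miss. x \<notin> S}" by (auto simp: inj_on_def)
  moreover have "(\<lambda>x. P - {x}) ` {x \<in> P. \<exists>S\<in>Miss. x \<notin> S} \<subseteq> {S \<in> Miss. card (P - S) = 1}"
  proof clarify
    fix x S assume x: "x \<in> P" "S \<in> Miss" "x \<notin> S"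
    have "S \<subseteq> P - {x}" using x MP by auto
    hence "P - {x} \<in> Miss" using up[OF x(2)] by blast
    moreover have "P - (P - {x}) = {x}" using x by auto
    ultimately show "P - {x} \<in> Miss \<and> card (P - (P - {x})) = 1" by auto
  qed
  ultimately show ?thesis by (intro card_inj_on_le) (auto intro: finite_subset[OF _ fM])
qed

lemma sum_inv_card_ge:
  assumes fin: "finite Os" and G: "G \<subseteq> Os" and pos: "\<And>A. A \<in> Os \<Longrightarrow> card A > 0"
    and bnd: "\<And>A. A \<in> G \<Longrightarrow> card A \<le> t"
  shows "real (card G) / real t \<le> (\<Sum>A\<in>Os. 1 / real (card A))"
proof -
  have fG: "finite G" using fin G by (rule rev_finite_subset)
  have "real (card G) / real t = (\<Sum>A\<in>G. 1 / real t)" by simp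
  also have "\<dots> \<le> (\<Sum>A\<in>G. 1 / real (card A))"
  proof (rule sum_mono)
    fix A assume "A \<in> G"
    hence "card A \<le> t" "card A > 0" using bnd pos G by auto
    thus "1 / real t \<le> 1 / real (card A)" by (simp add: frac_le)
  qed
  also have "\<dots> \<le> (\<Sum>A\<in>Os. 1 / real (card A))"
    using fin G by (intro sum_mono2) auto
  finally show ?thesis .
qed

lemma e_half:
  assumes fF: "finite F" and fU: "\<And>A. A \<in> F \<Longrightarrow> finite A" and her: "hereditary F" and x: "x \<in> P"
    and ne: "{A \<in> F. x \<in> A \<and> \<not> A \<subseteq> P} \<noteq> {}"
  shows "1/2 \<le> (\<Sum>A\<in>{A \<in> F. x \<in> A \<and> \<not> A \<subseteq> P}. 1 / real (card A))"
proof -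
  let ?O = "{A \<in> F. x \<in> A \<and> \<not> A \<subseteq> P}"
  obtain A where A: "A \<in> F" "x \<in> A" "\<not> A \<subseteq> P" using ne by auto
  then obtain y where y: "y \<in> A" "y \<notin> P" by auto
  have xy: "x \<noteq> y" using x y by auto
  have "{x,y} \<subseteq> A" using A y by auto
  hence "{x,y} \<in> F" using her A(1) unfolding hereditary_def by blast
  hence "{x,y} \<in> ?O" using y by auto
  moreover have "finite ?O" using fF by auto
  moreover have "\<And>B. B \<in> ?O \<Longrightarrow> card B > 0"
  proof -
    fix B assume B: "B \<in> ?O"
    hence "finite B" using fU by auto
    thus "card B > 0" using B by (auto simp: card_gt_0_iff)
  qed
  moreover have "card {x,y} \<le> 2" by (simp add: card_insert_if)
  ultimately have "real (card {{x,y}}) / real 2 \<le> (\<Sum>A\<in>?O. 1 / real (card A))"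
    by (intro sum_inv_card_ge) auto
  thus ?thesis by simp
qed

lemma e_big:
  fixes k j :: nat
  assumes fF: "finite F" and fU: "\<And>A. A \<in> F \<Longrightarrow> finite A" and her: "hereditary F" and x: "x \<in> P"
    and ok: "k \<le> 2 * card {A \<in> F. x \<in> A \<and> \<not> A \<subseteq> P}" and kj: "k \<le> 2 ^ (j+2)"
  shows "real k / (2 * (real j + 3)) \<le> (\<Sum>A\<in>{A \<in> F. x \<in> A \<and> \<not> A \<subseteq> P}. 1 / real (card A))"
proof -
  let ?O = "{A \<in> F. x \<in> A \<and> \<not> A \<subseteq> P}"
  have fO: "finite ?O" using fF by auto
  have pos: "\<And>A. A \<in> ?O \<Longrightarrow> card A > 0" using fU by (auto simp: card_gt_0_iff)
  show ?thesis
  proof (cases "\<forall>A\<in>?O. card A \<le> j + 2")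
    case True
    have "real (card ?O) / real (j+2) \<le> (\<Sum>A\<in>?O. 1 / real (card A))"
      using True by (intro sum_inv_card_ge[OF fO _ pos]) auto
    moreover have "real k / (2 * (real j + 3)) \<le> real (card ?O) / real (j+2)"
    proof -
      have "real k \<le> 2 * real (card ?O)" using ok by linarith
      hence "real k / (2 * (real j + 3)) \<le> 2 * real (card ?O) / (2 * (real j + 3))"
        by (intro divide_right_mono) auto
      also have "\<dots> = real (card ?O) / (real j + 3)" by (rule mult_divide_mult_cancel_left) simp
      also have "\<dots> \<le> real (card ?O) / real (j+2)"
        by (intro divide_left_mono) auto
      finally show ?thesis .
    qed
    ultimately show ?thesis by linarith
  next
    case False
    then obtain A where A0: "A \<in> ?O" "\<not> card A \<le> j + 2" by blast
    hence A: "A \<in> F" "x \<in> A" "\<not> A \<subseteq> P" "card A \<ge> j + 3" by auto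
    then obtain y where y: "y \<in> A" "y \<notin> P" by auto
    have xy: "x \<noteq> y" using x y by auto
    have fA: "finite A" using fU A by auto
    have xyA: "{x,y} \<subseteq> A" using A y by auto
    have "card (A - {x,y}) = card A - card {x,y}" using fA xyA by (intro card_Diff_subset) auto
    moreover have "card {x,y} = 2" using xy by simp
    ultimately have "j + 1 \<le> card (A - {x,y})" using A by linarith
    then obtain B where B: "B \<subseteq> A - {x,y}" "card B = j + 1"
      by (rule obtain_subset_with_card_n)
    have BA: "B \<subseteq> A" using B by blast
    have fB: "finite B" by (rule rev_finite_subset[OF fA BA])
    let ?G = "(\<lambda>C. insert x (insert y C)) ` Pow B"
    have inj: "inj_on (\<lambda>C. insert x (insert y C)) (Pow B)"
    proof (rule inj_onI)
      fix C D assume "C \<in> Pow B" "D \<in> Pow B" "insert x (insert y C) = insert x (insert y D)"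
      moreover have "x \<notin> B" "y \<notin> B" using B by auto
      ultimately have "insert x (insert y C) - {x,y} = insert x (insert y D) - {x,y}"
         "C = insert x (insert y C) - {x,y}" "D = insert x (insert y D) - {x,y}" by auto
      thus "C = D" by simp
    qed
    have cG: "card ?G = 2 ^ (j+1)" using inj fB B by (simp add: card_image card_Pow)
    have GO: "?G \<subseteq> ?O"
    proof
      fix D assume "D \<in> ?G"
      then obtain C where C: "C \<subseteq> B" "D = insert x (insert y C)" by auto
      hence "D \<subseteq> A" using B A y by auto
      hence "D \<in> F" using her A unfolding hereditary_def by blast
      thus "D \<in> ?O" using C y by auto
    qed
    have bnd: "\<And>D. D \<in> ?G \<Longrightarrow> card D \<le> j + 3"
    proof -
      fix D assume "D \<in> ?G"
      then obtain C where C: "C \<subseteq> B" "D = insert x (insert y C)" by auto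
      have "card C \<le> j + 1" using C B fB by (metis card_mono)
      moreover have fC: "finite C" by (rule rev_finite_subset[OF fB C(1)])
      have "card D \<le> Suc (Suc (card C))" using C(2) fC by (simp add: card_insert_if)
      ultimately show "card D \<le> j + 3" by linarith
    qed
    have "real (card ?G) / real (j+3) \<le> (\<Sum>A\<in>?O. 1 / real (card A))"
      by (rule sum_inv_card_ge[OF fO GO pos bnd])
    moreover have "real k / (2 * (real j + 3)) \<le> real (card ?G) / real (j+3)"
    proof -
      have "real k \<le> 2 ^ (j+2)" using kj by (metis of_nat_le_iff of_nat_numeral of_nat_power)
      also have "\<dots> = 2 * real (card ?G)" using cG by simp
      finally have "real k / (2 * (real j + 3)) \<le> 2 * real (card ?G) / (2 * (real j + 3))"
        by (intro divide_right_mono) auto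
      also have "\<dots> = real (card ?G) / (real j + 3)" by (rule mult_divide_mult_cancel_left) simp
      also have "\<dots> = real (card ?G) / real (j+3)" by simp
      finally show ?thesis .
    qed
    ultimately show ?thesis by linarith
  qed
qed

lemma exists_log:
  fixes k :: nat assumes "k \<ge> 1" shows "\<exists>j. 2 ^ j \<le> k \<and> k < 2 ^ Suc j"
  using assms
proof (induction k rule: less_induct)
  case (less k)
  show ?case
  proof (cases "k = 1")
    case True thus ?thesis by (intro exI[of _ 0]) simp
  next
    case False
    hence "k div 2 \<ge> 1" "k div 2 < k" using less.prems by auto
    then obtain j where j: "2 ^ j \<le> k div 2" "k div 2 < 2 ^ Suc j" using less.IH by blast
    show ?thesis
    proof (intro exI[of _ "Suc j"] conjI)
      show "2 ^ Suc j \<le> k" using j(1) by simp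
      show "k < 2 ^ Suc (Suc j)" using j(2) by simp
    qed
  qed
qed

lemma pow_big: "j \<ge> 6 \<Longrightarrow> 2 * j * j + 8 * j + 6 < 2 ^ j * (j - 2)"
proof (induction j rule: dec_induct)
  case base thus ?case by simp
next
  case (step i)
  have e: "2 ^ Suc i * (Suc i - 2) = 2 * (2 ^ i * (i - 2)) + 2 * 2 ^ i"
  proof -
    have "Suc i - 2 = (i - 2) + 1" using step.hyps by simp
    hence "2 ^ Suc i * (Suc i - 2) = 2 * 2 ^ i * ((i - 2) + 1)" by simp
    thus ?thesis by (simp add: algebra_simps)
  qed
  have l: "2 * (Suc i) * (Suc i) + 8 * Suc i + 6 \<le> 2 * (2 * i * i + 8 * i + 6)"
  proof -
    have "6 * i \<le> i * i" using step.hyps by simp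
    hence "2*(i*i) + 12*i + 16 \<le> 4*(i*i) + 16*i + 12" using step.hyps by linarith
    thus ?thesis by (simp add: algebra_simps)
  qed
  also have "\<dots> < 2 * (2 ^ i * (i - 2))" using step.IH by simp
  also have "\<dots> \<le> 2 * (2 ^ i * (i - 2)) + 2 * 2 ^ i" by simp
  also have "\<dots> = 2 ^ Suc i * (Suc i - 2)" using e by simp
  finally show ?case .
qed

lemma final_arith:
  fixes a b d j k m q1 :: nat
  assumes "a + b = d" "a * j + 2 + 2 * q1 \<le> 2 * m" "m + 1 \<le> d + k" "d \<le> q1 + b"
    "b \<le> 2 * j + 5" "2 ^ j \<le> k" "k < 2 ^ Suc j" "5 \<le> k" "50 \<le> d" "k + 1 \<le> d"
  shows False
proof -
  have aj: "a * j + 4 \<le> 2 * k + 2 * b" using assms(2-4) by linarith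
  have "d * j = a * j + b * j" using assms(1)[symmetric] by (simp add: add_mult_distrib)
  hence dj: "d * j + 4 \<le> 2 * k + (j + 2) * b" using aj by (simp add: algebra_simps)
  have "(j + 2) * b \<le> (j + 2) * (2 * j + 5)" using assms(5) by (rule mult_le_mono2)
  hence dj2: "d * j + 4 \<le> 2 * k + (j + 2) * (2 * j + 5)" using dj by linarith
  have j2: "j \<ge> 2"
  proof (rule ccontr)
    assume "\<not> j \<ge> 2" hence "j \<le> 1" by simp
    hence "(2::nat) ^ Suc j \<le> 2 ^ 2" by (intro power_increasing) auto
    thus False using assms(7,8) by simp
  qed
  show False
  proof (cases "j \<le> 5")
    case True
    hence "j = 2 \<or> j = 3 \<or> j = 4 \<or> j = 5" using j2 by auto
    moreover have "50 * j \<le> d * j" using assms(9) by simp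
    ultimately show False using dj2 assms(7) by auto
  next
    case False
    hence j6: "j \<ge> 6" by simp
    have "(k + 1) * j \<le> d * j" using assms(10) by (rule mult_le_mono1)
    hence "k * j + j + 4 \<le> 2 * k + (j + 2) * (2 * j + 5)" using dj2 by (simp add: algebra_simps)
    hence "k * (j - 2) + j + 4 \<le> (j + 2) * (2 * j + 5)"
      using j6 by (simp add: algebra_simps diff_mult_distrib2)
    moreover have "2 ^ j * (j - 2) \<le> k * (j - 2)" using assms(6) by simp
    moreover have "2 * j * j + 8 * j + 6 < 2 ^ j * (j - 2)" using pow_big[OF j6] .
    ultimately show False by (simp add: algebra_simps)
  qed
qed

lemma inside_count:
  assumes fP: "finite P" and IP: "I \<subseteq> Pow P" and e: "{} \<in> I"
  shows "(\<Sum>x\<in>P. \<Sum>A\<in>{A \<in> I. x \<in> A}. 1 / real (card A)) = real (card I) - 1"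
proof -
  have fI: "finite I" using fP IP by (meson finite_Pow_iff finite_subset)
  have "(\<Sum>x\<in>P. \<Sum>A\<in>{A \<in> I. x \<in> A}. 1 / real (card A)) = (\<Sum>A\<in>I. \<Sum>x\<in>{x \<in> P. x \<in> A}. 1 / real (card A))"
    using fP fI by (rule sum.swap_restrict)
  also have "\<dots> = (\<Sum>A\<in>I. if A = {} then 0 else 1)"
  proof (rule sum.cong[OF refl])
    fix A assume A: "A \<in> I"
    hence "{x \<in> P. x \<in> A} = A" using IP by auto
    moreover have "finite A" using A IP fP by (meson PowD rev_finite_subset subsetD)
    ultimately show "(\<Sum>x\<in>{x \<in> P. x \<in> A}. 1 / real (card A)) = (if A = {} then 0 else 1)"
      by simp
  qed
  also have "\<dots> = real (card (I - {{}}))"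
    using fI by (simp add: sum.If_cases Int_def Diff_eq Collect_neg_eq[symmetric] Compl_eq)
  also have "\<dots> = real (card I) - 1"
  proof -
    have "card I \<ge> 1" using e fI by (metis One_nat_def Suc_leI card_gt_0_iff empty_iff)
    thus ?thesis using e fI by (simp add: card_Diff_singleton of_nat_diff)
  qed
  finally show ?thesis .
qed

theorem mainTheorem19:
  fixes n d c :: nat and F :: "nat set set" and P :: "nat set"
  assumes "d \<ge> 50" and "1 \<le> c" and "c \<le> d"
    and "family_on n F" and "hereditary F"
    and "min_deg n F \<ge> 2 ^ (d - 1) - c + 1"
    and "isolated_pile n d F P"
    and "(\<Sum>x\<in>P. weight F x) < 2 ^ d - real c"
  shows "card {x \<in> P. good d F x} \<le> 7"
proof -
  note d50 = assms(1) and c1 = assms(2) and cd = assms(3) and her = assms(5)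
  have pile: "is_pile n d F P" using assms(7) unfolding isolated_pile_def by blast
  hence P1n: "P \<subseteq> {1..n}" and cP: "card P = d" and Pnb: "\<And>y. y \<in> P \<Longrightarrow> P \<subseteq> nbhd F y"
    and "\<exists>z\<in>P. nbhd F z = P" unfolding is_pile_def by auto
  then obtain z where zP: "z \<in> P" and nbz: "nbhd F z = P" by blast
  have fP: "finite P" using P1n by (rule finite_subset) simp
  have FPow: "F \<subseteq> Pow {1..n}" using assms(4) unfolding family_on_def .
  have fF: "finite F" using FPow by (rule finite_subset) simp
  have fU: "\<And>A. A \<in> F \<Longrightarrow> finite A" using FPow by (meson PowD finite_atLeastAtMost finite_subset subsetD)
  define Miss where "Miss = Pow P - F"
  define m where "m = card Miss"
  define In where "In = {A \<in> F. A \<subseteq> P}"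
  define Out where "Out = (\<lambda>x. {A \<in> F. x \<in> A \<and> \<not> A \<subseteq> P})"
  define e where "e = (\<lambda>x. \<Sum>A\<in>Out x. 1 / real (card A))"
  define nx where "nx = (\<lambda>x. card {S \<in> Miss. x \<notin> S})"
  define Mx where "Mx = (\<lambda>x. card {S \<in> Miss. x \<in> S})"
  have MP: "Miss \<subseteq> Pow P" unfolding Miss_def by auto
  have fM: "finite Miss" using MP fP by (meson finite_Pow_iff finite_subset)
  have up: "\<And>S S'. S \<in> Miss \<Longrightarrow> S \<subseteq> S' \<Longrightarrow> S' \<subseteq> P \<Longrightarrow> S' \<in> Miss"
    using her unfolding Miss_def hereditary_def by blast
  have e_nonneg: "\<And>x. e x \<ge> 0" unfolding e_def by (intro sum_nonneg) auto
  have "z \<in> nbhd F z" using nbz zP by simp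
  then obtain A0 where "A0 \<in> F" unfolding nbhd_def by auto
  hence emp: "{} \<in> F" using her unfolding hereditary_def by blast
  have PowU: "Pow P = In \<union> Miss" "In \<inter> Miss = {}" unfolding In_def Miss_def by auto
  have cIn: "card In + m = 2 ^ d"
  proof -
    have "card (Pow P) = card In + card Miss" using PowU fP
      by (metis card_Un_disjoint finite_Pow_iff finite_Un)
    thus ?thesis using fP cP by (simp add: card_Pow m_def)
  qed
  have wsplit: "\<And>x. x \<in> P \<Longrightarrow> weight F x = (\<Sum>A\<in>{A \<in> In. x \<in> A}. 1 / real (card A)) + e x"
  proof -
    fix x assume x: "x \<in> P"
    have "{A \<in> F. x \<in> A} = {A \<in> In. x \<in> A} \<union> Out x" unfolding In_def Out_def by auto
    moreover have "{A \<in> In. x \<in> A} \<inter> Out x = {}" unfolding In_def Out_def by auto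
    moreover have "finite {A \<in> In. x \<in> A}" "finite (Out x)" unfolding In_def Out_def using fF by auto
    ultimately show "weight F x = (\<Sum>A\<in>{A \<in> In. x \<in> A}. 1 / real (card A)) + e x"
      unfolding weight_def e_def by (simp add: sum.union_disjoint)
  qed
  define E where "E = (\<Sum>x\<in>P. e x)"
  have E_nonneg: "E \<ge> 0" unfolding E_def using e_nonneg by (simp add: sum_nonneg)
  have "(\<Sum>x\<in>P. weight F x) = (\<Sum>x\<in>P. \<Sum>A\<in>{A \<in> In. x \<in> A}. 1 / real (card A)) + E"
    unfolding E_def using wsplit by (simp add: sum.distrib)
  also have "\<dots> = real (card In) - 1 + E"
  proof -
    have "In \<subseteq> Pow P" "{} \<in> In" unfolding In_def using emp by auto
    from inside_count[OF fP this] show ?thesis by simp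
  qed
  finally have wsum: "(\<Sum>x\<in>P. weight F x) = real (card In) - 1 + E" .
  have "real (card In) = 2 ^ d - real m" using cIn
    by (metis add_diff_cancel_right' of_nat_add of_nat_numeral of_nat_power)
  hence Elt: "E < real m + 1 - real c" using wsum assms(8) by linarith
  have cm: "c \<le> m" using Elt E_nonneg by linarith
  define k where "k = m + 1 - c"
  have kreal: "real k = real m + 1 - real c" unfolding k_def using cm by (simp add: of_nat_diff)
  have Ek: "E < real k" using Elt kreal by linarith
  have k1: "k \<ge> 1" unfolding k_def using cm by simp
  have c2: "c \<le> 2 ^ (d - 1)"
  proof -
    have "d - 1 < 2 ^ (d - 1)" by (rule less_exp)
    thus ?thesis using cd d50 by linarith
  qed
  have degk: "\<And>x. x \<in> P \<Longrightarrow> m + 1 \<le> c + nx x + card (Out x) \<and> Mx x + 1 \<le> c + card (Out x)"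
  proof -
    fix x assume x: "x \<in> P"
    have xn: "x \<in> {1..n}" using x P1n by auto
    have "min_deg n F \<le> deg F x" unfolding min_deg_def using xn by (intro Min_le) auto
    hence dg: "2 ^ (d - 1) - c + 1 \<le> deg F x" using assms(6) by linarith
    have "{A \<in> F. x \<in> A} = {A \<in> In. x \<in> A} \<union> Out x" unfolding In_def Out_def by auto
    moreover have "{A \<in> In. x \<in> A} \<inter> Out x = {}" unfolding In_def Out_def by auto
    moreover have "finite {A \<in> In. x \<in> A}" "finite (Out x)" unfolding In_def Out_def using fF by auto
    ultimately have dgx: "deg F x = card {A \<in> In. x \<in> A} + card (Out x)"
      unfolding deg_def by (simp add: card_Un_disjoint)
    have "{A \<in> Pow P. x \<in> A} = {A \<in> In. x \<in> A} \<union> {S \<in> Miss. x \<in> S}" 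
      "{A \<in> In. x \<in> A} \<inter> {S \<in> Miss. x \<in> S} = {}" unfolding In_def Miss_def by auto
    moreover have "finite {A \<in> In. x \<in> A}" "finite {S \<in> Miss. x \<in> S}" unfolding In_def using fF fM by auto
    ultimately have "card {A \<in> Pow P. x \<in> A} = card {A \<in> In. x \<in> A} + Mx x"
      unfolding Mx_def by (simp add: card_Un_disjoint)
    hence inx: "card {A \<in> In. x \<in> A} + Mx x = 2 ^ (d - 1)" using card_Pow_mem[OF fP x] cP by simp
    have "Miss = {S \<in> Miss. x \<in> S} \<union> {S \<in> Miss. x \<notin> S}" "{S \<in> Miss. x \<in> S} \<inter> {S \<in> Miss. x \<notin> S} = {}" by auto
    hence mx: "m = Mx x + nx x" unfolding m_def Mx_def nx_def using fM
      by (metis (no_types, lifting) card_Un_disjoint finite_Un)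
    show "m + 1 \<le> c + nx x + card (Out x) \<and> Mx x + 1 \<le> c + card (Out x)"
      using dg dgx inx mx c2 by linarith
  qed
  have kx: "\<And>x. x \<in> P \<Longrightarrow> k \<le> nx x + card (Out x)" using degk unfolding k_def by fastforce
  have Outz: "Out z = {}"
  proof -
    have "\<And>A. A \<in> F \<Longrightarrow> z \<in> A \<Longrightarrow> A \<subseteq> P" using nbz unfolding nbhd_def by blast
    thus ?thesis unfolding Out_def by auto
  qed
  have nxMz: "nx z \<le> Mx z"
  proof -
    have "inj_on (insert z) {S \<in> Miss. z \<notin> S}" by (auto simp: inj_on_def)
    moreover have "insert z ` {S \<in> Miss. z \<notin> S} \<subseteq> {S \<in> Miss. z \<in> S}"
    proof (rule image_subsetI)
      fix S assume "S \<in> {S \<in> Miss. z \<notin> S}"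
      hence "S \<in> Miss" "insert z S \<subseteq> P" using MP zP by auto
      thus "insert z S \<in> {S \<in> Miss. z \<in> S}" using up by blast
    qed
    ultimately show ?thesis unfolding nx_def Mx_def using fM
      by (intro card_inj_on_le) auto
  qed
  have kd: "k + 1 \<le> d" using kx[OF zP] degk[OF zP] Outz nxMz cd by simp
  have goodOut: "\<And>x. x \<in> P \<Longrightarrow> good d F x \<Longrightarrow> Out x \<noteq> {}"
  proof -
    fix x assume x: "x \<in> P" and g: "good d F x"
    show "Out x \<noteq> {}"
    proof
      assume "Out x = {}"
      hence "\<And>A. A \<in> F \<Longrightarrow> x \<in> A \<Longrightarrow> A \<subseteq> P" unfolding Out_def by auto
      hence "nbhd F x \<subseteq> P" unfolding nbhd_def by blast
      hence "nbhd F x = P" using Pnb[OF x] by blast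
      thus False using g cP unfolding good_def by simp
    qed
  qed
  have sumsub: "\<And>G. G \<subseteq> P \<Longrightarrow> (\<Sum>x\<in>G. e x) \<le> E"
    unfolding E_def using fP e_nonneg by (intro sum_mono2) auto
  show ?thesis
  proof (cases "k \<le> 4")
    case True
    let ?G = "{x \<in> P. good d F x}"
    have "real (card ?G) * (1/2) \<le> (\<Sum>x\<in>?G. e x)"
    proof (rule sum_bounded_below)
      fix x assume "x \<in> ?G"
      hence "x \<in> P" "Out x \<noteq> {}" using goodOut by auto
      thus "1/2 \<le> e x" unfolding e_def Out_def using e_half[OF fF fU her] by blast
    qed
    also have "\<dots> \<le> E" by (rule sumsub) auto
    finally have "real (card ?G) < 8" using Ek True by linarith
    thus ?thesis by simp
  next
    case False
    hence k5: "k \<ge> 5" by simp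
    obtain j where j: "2 ^ j \<le> k" "k < 2 ^ Suc j" using exists_log k1 by blast
    have j1: "j \<ge> 1"
    proof (rule ccontr)
      assume "\<not> j \<ge> 1" hence "j = 0" by simp
      thus False using j k5 by simp
    qed
    define nb where "nb = (\<lambda>x. card {y \<in> P. y \<noteq> x \<and> P - {x,y} \<in> Miss})"
    define R where "R = {x \<in> P. j \<le> nb x}"
    define Po where "Po = {x \<in> P. nb x < j}"
    define Q1 where "Q1 = {S \<in> Miss. card (P - S) = 1}"
    define Q where "Q = {S \<in> Miss. card (P - S) = 2}"
    have ab: "card R + card Po = d"
    proof -
      have "P = R \<union> Po" "R \<inter> Po = {}" unfolding R_def Po_def by auto
      thus ?thesis using fP cP by (metis card_Un_disjoint finite_Un)
    qed
    have poor_e: "\<And>x. x \<in> Po \<Longrightarrow> real k / (2 * (real j + 3)) \<le> e x"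
    proof -
      fix x assume x: "x \<in> Po"
      hence xP: "x \<in> P" and nbx: "nb x < j" unfolding Po_def by auto
      have "nx x \<le> 2 ^ nb x" unfolding nx_def nb_def by (rule nx_le_pow[OF fP MP up xP])
      also have "\<dots> \<le> 2 ^ (j - 1)" using nbx by (intro power_increasing) auto
      finally have "nx x \<le> 2 ^ (j - 1)" .
      moreover have "2 * 2 ^ (j - 1) = (2::nat) ^ j" using j1 by (metis Suc_diff_1 less_le_trans power_Suc zero_less_one)
      ultimately have "k \<le> 2 * card (Out x)" using kx[OF xP] j by linarith
      moreover have "k \<le> 2 ^ (j + 2)"
      proof -
        have "(2::nat) ^ Suc j \<le> 2 ^ (j+2)" by (intro power_increasing) auto
        thus ?thesis using j by linarith
      qed
      ultimately show "real k / (2 * (real j + 3)) \<le> e x"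
        unfolding e_def Out_def by (intro e_big[OF fF fU her xP]) auto
    qed
    have "real (card Po) * (real k / (2 * (real j + 3))) \<le> (\<Sum>x\<in>Po. e x)"
      by (rule sum_bounded_below) (rule poor_e)
    also have "\<dots> \<le> E" by (rule sumsub) (auto simp: Po_def)
    finally have "real (card Po) * (real k / (2 * (real j + 3))) < real k" using Ek by linarith
    hence "real k * real (card Po) < real k * (2 * (real j + 3))" by (simp add: field_simps)
    moreover have "real k > 0" using k1 by simp
    ultimately have "real (card Po) < 2 * (real j + 3)" by (rule mult_less_cancel_left_pos[THEN iffD1, rotated])
    hence "real (card Po) < real (2 * j + 6)" by simp
    hence "card Po < 2 * j + 6" by (simp only: of_nat_less_iff)
    hence bb: "card Po \<le> 2 * j + 5" by linarith
    have "real (card R) * real j \<le> (\<Sum>x\<in>R. real (nb x))"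
      by (rule sum_bounded_below) (auto simp: R_def)
    hence "card R * j \<le> (\<Sum>x\<in>R. nb x)" by (metis of_nat_le_iff of_nat_mult of_nat_sum)
    also have "\<dots> \<le> (\<Sum>x\<in>P. nb x)" using fP by (intro sum_mono2) (auto simp: R_def)
    also have "\<dots> \<le> (\<Sum>x\<in>P. card {S \<in> Miss. card (P - S) = 2 \<and> x \<notin> S})"
      unfolding nb_def by (intro sum_mono nb_le_Q[OF fP MP])
    also have "\<dots> = 2 * card Q" unfolding Q_def by (rule sum_Q[OF fP MP])
    finally have aj: "card R * j \<le> 2 * card Q" .
    have "Miss \<noteq> {}" using cm c1 unfolding m_def by auto
    then obtain S0 where "S0 \<in> Miss" by blast
    hence PM: "P \<in> Miss" using up MP by blast
    have mc: "1 + card Q1 + card Q \<le> m" unfolding m_def Q1_def Q_def by (rule miss_count[OF fP MP PM])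
    have q1: "card {x \<in> P. \<exists>S\<in>Miss. x \<notin> S} \<le> card Q1" unfolding Q1_def by (rule nx_pos_count[OF fP MP up])
    have "{x \<in> P. \<not> (\<exists>S\<in>Miss. x \<notin> S)} \<subseteq> Po"
    proof
      fix x assume x: "x \<in> {x \<in> P. \<not> (\<exists>S\<in>Miss. x \<notin> S)}"
      hence emp0: "{y \<in> P. y \<noteq> x \<and> P - {x,y} \<in> Miss} = {}" by auto
      have "nb x = 0" unfolding nb_def by (simp only: emp0 card.empty)
      thus "x \<in> Po" using x j1 unfolding Po_def by auto
    qed
    moreover have "finite Po" unfolding Po_def using fP by simp
    ultimately have "card {x \<in> P. \<not> (\<exists>S\<in>Miss. x \<notin> S)} \<le> card Po"
      by (intro card_mono)
    moreover have "card {x \<in> P. \<exists>S\<in>Miss. x \<notin> S} + card {x \<in> P. \<not> (\<exists>S\<in>Miss. x \<notin> S)} = d"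
    proof -
      have e1: "P = {x \<in> P. \<exists>S\<in>Miss. x \<notin> S} \<union> {x \<in> P. \<not> (\<exists>S\<in>Miss. x \<notin> S)}" by auto
      have "card ({x \<in> P. \<exists>S\<in>Miss. x \<notin> S} \<union> {x \<in> P. \<not> (\<exists>S\<in>Miss. x \<notin> S)}) = 
         card {x \<in> P. \<exists>S\<in>Miss. x \<notin> S} + card {x \<in> P. \<not> (\<exists>S\<in>Miss. x \<notin> S)}"
        using fP by (intro card_Un_disjoint) auto
      thus ?thesis using e1 cP by simp
    qed
    ultimately have dq: "d \<le> card Q1 + card Po" using q1 by linarith
    have mk: "m + 1 \<le> d + k" unfolding k_def using cd cm by linarith
    have "card R * j + 2 + 2 * card Q1 \<le> 2 * m" using aj mc by linarith
    from final_arith[OF ab this mk dq bb j k5 d50 kd] show ?thesis ..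
  qed
qed

end
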